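(* For every language $L\subseteq\Sigma^+$: if $(\Sigma^+\setminus L)\in LinConj$, then $L\in\mathtt{incl}$-$\mathtt{ESO}$-$\mathtt{HORN}$.
   Context: Fix a finite alphabet $\Sigma$. A nonempty word $w=w_1\cdots w_n$ is represented by the structure $\langle w\rangle=([1,n];(Q_s)_{s\in\Sigma},\mathtt{min},\mathtt{max},\mathtt{suc},\mathtt{pred})$ with $Q_s(i)\iff w_i=s$, $\mathtt{min}(i)\iff i=1$, $\mathtt{max}(i)\iff i=n$, $\mathtt{suc}(i)=\min(i+1,n)$, $\mathtt{pred}(i)=\max(i-1,1)$. For an integer $a$, $x+a$ denotes $\mathtt{suc}^a(x)$ if $a\ge0$ and $\mathtt{pred}^{-a}(x)$ if $a<0$; $y-b=\mathtt{pred}^b(y)$. An inclusion Horn formula is $\Phi=\exists\mathbf{R}\forall x\forall y\,\psi(x,y)$, $\mathbf{R}$ a finite set of binary relation symbols, $\psi$ a conjunction of Horn clauses over $\{(Q_s)_{s\in\Sigma},\mathtt{min},\mathtt{max},\mathtt{suc},\mathtt{pred}\}\cup\mathbf{R}\cup\{=,\le,<\}$, each of the form $x\le y\wedge\delta_1\wedge\cdots\wedge\delta_r\to\delta_0$ with $\delta_0$ an atom $R(x,y)$ ($R\in\mathbf{R}$) or $\bot$, each $\delta_i$ one of: $U(x+a)$, $\neg U(x+a)$, $U(y+a)$, $\neg U(y+a)$ for $U\in\{(Q_s)_{s\in\Sigma},\mathtt{min},\mathtt{max}\}$, $a\in\mathbb Z$; $x=y$ or $x<y$; $S(x+a,y-b)\wedge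 x+a\le y-b$ with $S\in\mathbf{R}$, $a,b\ge0$. $\mathtt{incl}$-$\mathtt{ESO}$-$\mathtt{HORN}$ is the class of languages $\{w\in\Sigma^+:\langle w\rangle\models\Phi\}$. A linear conjunctive grammar is $G=(\Sigma,N,P,S)$ with nonterminals $N$, start symbol $S\in N$, and a finite set $P$ of rules $A\to\alpha_1\&\cdots\&\alpha_k$ ($k\ge1$), each $\alpha_i\in\Sigma^*\cup\Sigma^*N\Sigma^*$. The languages $(L(A))_{A\in N}$ form the least (componentwise) solution of $L(A)=\bigcup_{(A\to\alpha_1\&\cdots\&\alpha_k)\in P}\bigcap_iL(\alpha_i)$, where $L(uBv)=uL(B)v$, $L(u)=\{u\}$ for $u,v\in\Sigma^*$, $B\in N$; $L(G)=L(S)$. $LinConj$ is the class of languages generated by such grammars. *)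

theory Defs
  imports Main
begin

text \<open>A nonempty word w of length n is viewed as a structure with domain [1,n].
  Position i (1 \<le> i \<le> n) carries the letter w ! (i - 1).\<close>

definition suc_pos :: "nat \<Rightarrow> nat \<Rightarrow> nat" where
  "suc_pos n i = min (i + 1) n"

definition pred_pos :: "nat \<Rightarrow> nat" where
  "pred_pos i = max (i - 1) 1"

definition shift :: "nat \<Rightarrow> nat \<Rightarrow> int \<Rightarrow> nat" where
  "shift n x a = (if a \<ge> 0 then (suc_pos n ^^ nat a) x else (pred_pos ^^ nat (- a)) x)"

datatype 'a upred = Qs 'a | MinP | MaxP

datatype fovar = VX | VY

datatype 'a hatom =
    PosU "'a upred" fovar int
  | NegU "'a upred" fovar int
  | EqXY
  | LtXY
  | RelA nat nat nat                 \<comment> \<open>S(x + a, y - b) \<and> x + a \<le> y - b, with a, b \<ge> 0\<close>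

datatype hhead = HeadRel nat | HeadBot

text \<open>A clause x \<le> y \<and> \<delta>1 \<and> ... \<and> \<delta>r \<longrightarrow> \<delta>0 is (body list, head).
  An inclusion Horn formula \<exists>R \<forall>x \<forall>y \<psi> is given by the list of clauses of \<psi>;
  the existentially quantified relation symbols are those occurring in the clauses
  (quantifying over interpretations of all symbols is equivalent).\<close>
type_synonym 'a hclause = "'a hatom list \<times> hhead"
type_synonym 'a hformula = "'a hclause list"

definition upred_holds :: "'a list \<Rightarrow> 'a upred \<Rightarrow> nat \<Rightarrow> bool" where
  "upred_holds w U i = (case U of
      Qs s \<Rightarrow> w ! (i - 1) = s
    | MinP \<Rightarrow> i = 1
    | MaxP \<Rightarrow> i = length w)"

definition var_val :: "fovar \<Rightarrow> nat \<Rightarrow> nat \<Rightarrow> nat" where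
  "var_val v x y = (case v of VX \<Rightarrow> x | VY \<Rightarrow> y)"

fun hatom_holds :: "'a list \<Rightarrow> (nat \<Rightarrow> nat \<Rightarrow> nat \<Rightarrow> bool) \<Rightarrow> nat \<Rightarrow> nat \<Rightarrow> 'a hatom \<Rightarrow> bool" where
  "hatom_holds w \<rho> x y (PosU U v a) = upred_holds w U (shift (length w) (var_val v x y) a)"
| "hatom_holds w \<rho> x y (NegU U v a) = (\<not> upred_holds w U (shift (length w) (var_val v x y) a))"
| "hatom_holds w \<rho> x y EqXY = (x = y)"
| "hatom_holds w \<rho> x y LtXY = (x < y)"
| "hatom_holds w \<rho> x y (RelA S a b) =
     (\<rho> S (shift (length w) x (int a)) (shift (length w) y (- int b)) \<and>
      shift (length w) x (int a) \<le> shift (length w) y (- int b))"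

fun hhead_holds :: "(nat \<Rightarrow> nat \<Rightarrow> nat \<Rightarrow> bool) \<Rightarrow> nat \<Rightarrow> nat \<Rightarrow> hhead \<Rightarrow> bool" where
  "hhead_holds \<rho> x y (HeadRel R) = \<rho> R x y"
| "hhead_holds \<rho> x y HeadBot = False"

definition hclause_holds :: "'a list \<Rightarrow> (nat \<Rightarrow> nat \<Rightarrow> nat \<Rightarrow> bool) \<Rightarrow> nat \<Rightarrow> nat \<Rightarrow> 'a hclause \<Rightarrow> bool" where
  "hclause_holds w \<rho> x y c =
     ((x \<le> y \<and> (\<forall>\<delta>\<in>set (fst c). hatom_holds w \<rho> x y \<delta>)) \<longrightarrow> hhead_holds \<rho> x y (snd c))"

definition hmodels :: "'a list \<Rightarrow> 'a hformula \<Rightarrow> bool" where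
  "hmodels w \<Phi> = (\<exists>\<rho>. \<forall>x\<in>{1..length w}. \<forall>y\<in>{1..length w}. \<forall>c\<in>set \<Phi>. hclause_holds w \<rho> x y c)"

definition incl_ESO_HORN :: "'a list set set" where
  "incl_ESO_HORN = {L. \<exists>\<Phi>. L = {w. w \<noteq> [] \<and> hmodels w \<Phi>}}"

datatype 'a lconj = TermC "'a list" | NontC "'a list" nat "'a list"

type_synonym 'a lrule = "nat \<times> 'a lconj list"
type_synonym 'a lgrammar = "'a lrule list \<times> nat"

text \<open>The least solution of the language equations, as an inductive predicate.\<close>
inductive lderives :: "'a lrule list \<Rightarrow> nat \<Rightarrow> 'a list \<Rightarrow> bool" for P where
  rule: "(A, \<alpha>s) \<in> set P \<Longrightarrow>
         (\<forall>\<alpha>\<in>set \<alpha>s.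
              (\<exists>u. \<alpha> = TermC u \<and> w = u) \<or>
              (\<exists>u B v x. \<alpha> = NontC u B v \<and> w = u @ x @ v \<and> lderives P B x)) \<Longrightarrow>
         lderives P A w"

definition lgrammar_wf :: "'a lgrammar \<Rightarrow> bool" where
  "lgrammar_wf G = (\<forall>r\<in>set (fst G). snd r \<noteq> [])"

definition lgrammar_lang :: "'a lgrammar \<Rightarrow> 'a list set" where
  "lgrammar_lang G = {w. lderives (fst G) (snd G) w}"

definition LinConj :: "'a list set set" where
  "LinConj = {L. \<exists>G. lgrammar_wf G \<and> L = lgrammar_lang G}"

end

theory Submission
  imports Defs "HOL-Library.Countable"
begin

datatype 'a key = KN nat | KT "'a list" | KC "'a list" nat "'a list"

instance key :: (countable) countable
  by countable_datatype

definition enc :: "'a::countable key \<Rightarrow> nat" where "enc = to_nat"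

lemma enc_eq[simp]: "enc k1 = enc k2 \<longleftrightarrow> k1 = k2"
  by (simp add: enc_def)

fun clT :: "'a::countable list \<Rightarrow> 'a hclause list" where
  "clT [] = []"
| "clT (a#t) = (if t = [] then [([PosU (Qs a) VX 0, EqXY], HeadRel (enc (KT [a])))]
     else [([PosU (Qs a) VX 0, LtXY, RelA (enc (KT t)) 1 0], HeadRel (enc (KT (a#t))))]) @ clT t"

fun clCr :: "bool \<Rightarrow> nat \<Rightarrow> 'a::countable list \<Rightarrow> 'a hclause list" where
  "clCr nu B [] = [([RelA (enc (KN B :: 'a key)) 0 0], HeadRel (enc (KC [] B ([]::'a list))))]"
| "clCr nu B (a#rv) = [([PosU (Qs a) VY 0, LtXY, RelA (enc (KC [] B (rev rv))) 0 1], HeadRel (enc (KC [] B (rev rv @ [a]))))]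
     @ (if rv = [] \<and> nu then [([PosU (Qs a) VY 0, EqXY], HeadRel (enc (KC [] B [a])))] else []) @ clCr nu B rv"

fun clCu :: "bool \<Rightarrow> 'a::countable list \<Rightarrow> nat \<Rightarrow> 'a list \<Rightarrow> 'a hclause list" where
  "clCu nu [] B v = clCr nu B (rev v)"
| "clCu nu (a#u) B v = [([PosU (Qs a) VX 0, LtXY, RelA (enc (KC u B v)) 1 0], HeadRel (enc (KC (a#u) B v)))]
     @ (if u = [] \<and> v = [] \<and> nu then [([PosU (Qs a) VX 0, EqXY], HeadRel (enc (KC [a] B [])))] else []) @ clCu nu u B v"

fun keyof :: "'a lconj \<Rightarrow> 'a key" where
  "keyof (TermC t) = KT t"
| "keyof (NontC u B v) = KC u B v"

fun clA :: "'a::countable lrule list \<Rightarrow> 'a lconj \<Rightarrow> 'a hclause list" where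
  "clA P (TermC t) = clT t"
| "clA P (NontC u B v) = clCu (lderives P B []) u B v"

definition ruleCl :: "nat \<Rightarrow> 'a::countable lconj list \<Rightarrow> 'a hclause" where
  "ruleCl A as = (map (\<lambda>\<alpha>. RelA (enc (keyof \<alpha>)) 0 0) as, HeadRel (enc (KN A :: 'a key)))"

definition botCl :: "nat \<Rightarrow> 'a::countable hclause" where
  "botCl S = ([PosU MinP VX 0, PosU MaxP VY 0, RelA (enc (KN S :: 'a key)) 0 0], HeadBot)"

definition Phi :: "'a::countable lrule list \<Rightarrow> nat \<Rightarrow> 'a hformula" where
  "Phi P S = concat (map (\<lambda>(A,as). ruleCl A as # concat (map (clA P) as)) P) @ [botCl S]"

definition sub :: "'a list \<Rightarrow> nat \<Rightarrow> nat \<Rightarrow> 'a list" where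
  "sub w x y = take (Suc y - x) (drop (x - 1) w)"

fun semk :: "'a lrule list \<Rightarrow> 'a key \<Rightarrow> 'a list \<Rightarrow> bool" where
  "semk P (KN B) s = lderives P B s"
| "semk P (KT t) s = (s = t)"
| "semk P (KC u B v) s = (\<exists>m. s = u @ m @ v \<and> lderives P B m)"

definition rho0 :: "'a::countable lrule list \<Rightarrow> 'a list \<Rightarrow> nat \<Rightarrow> nat \<Rightarrow> nat \<Rightarrow> bool" where
  "rho0 P w k x y = (\<exists>key. enc key = k \<and> semk P key (sub w x y))"

lemma rho0_enc[simp]: "rho0 P w (enc key) x y = semk P key (sub w x y)"
  unfolding rho0_def by auto

lemma shift0[simp]: "shift n x 0 = x"
  by (simp add: shift_def)
lemma shift1[simp]: "shift n x 1 = min (x+1) n"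
  by (simp add: shift_def suc_pos_def)
lemma shiftm1[simp]: "shift n x (- 1) = max (x-1) 1"
  by (simp add: shift_def pred_pos_def)

lemma sub_single: "1 \<le> x \<Longrightarrow> x \<le> length w \<Longrightarrow> sub w x x = [w!(x-1)]"
  unfolding sub_def
  by (simp add: take_Suc_conv_app_nth)

lemma sub_cons: "1 \<le> x \<Longrightarrow> x < y \<Longrightarrow> y \<le> length w \<Longrightarrow> sub w x y = w!(x-1) # sub w (x+1) y"
proof -
  assume a: "1 \<le> x" "x < y" "y \<le> length w"
  have d: "drop (x-1) w = w!(x-1) # drop x w"
  proof -
    have "x - 1 < length w" using a by simp
    from Cons_nth_drop_Suc[OF this] show ?thesis using a by simp
  qed
  have e: "Suc y - x = Suc (Suc y - (x+1))" using a by simp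
  show ?thesis unfolding sub_def d e by simp
qed

lemma sub_snoc: "1 \<le> x \<Longrightarrow> x < y \<Longrightarrow> y \<le> length w \<Longrightarrow> sub w x y = sub w x (y-1) @ [w!(y-1)]"
proof -
  assume a: "1 \<le> x" "x < y" "y \<le> length w"
  have e: "Suc y - x = Suc (Suc (y-1) - x)" using a by simp
  have l: "Suc (y-1) - x < length (drop (x-1) w)" using a by simp
  have n: "drop (x-1) w ! (Suc (y-1) - x) = w!(y-1)" using a by simp
  show ?thesis unfolding sub_def e take_Suc_conv_app_nth[OF l] n by simp
qed

lemma sub_len: "1 \<le> x \<Longrightarrow> x \<le> y \<Longrightarrow> y \<le> length w \<Longrightarrow> length (sub w x y) = Suc y - x"
  unfolding sub_def by simp

lemma sub_full: "sub w 1 (length w) = w"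
  unfolding sub_def by simp

lemma sound_T:
  assumes "c \<in> set (clT t)" "1 \<le> x" "y \<le> length w"
  shows "hclause_holds w (rho0 P w) x y c"
  using assms
proof (induction t arbitrary: c)
  case Nil then show ?case by simp
next
  case (Cons a t)
  show ?case
  proof (cases "c \<in> set (clT t)")
    case True then show ?thesis using Cons by blast
  next
    case False
    then have c: "c = (if t = [] then ([PosU (Qs a) VX 0, EqXY], HeadRel (enc (KT [a])))
     else ([PosU (Qs a) VX 0, LtXY, RelA (enc (KT t)) 1 0], HeadRel (enc (KT (a#t)))))"
      using Cons.prems by (auto split: if_splits)
    show ?thesis using Cons.prems unfolding c hclause_holds_def
      by (auto simp: upred_holds_def var_val_def sub_single sub_cons)
  qed
qed

lemma sound_Cr:
  assumes "c \<in> set (clCr nu B rv)" "nu \<longrightarrow> lderives P B []" "1 \<le> x" "y \<le> length w"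
  shows "hclause_holds w (rho0 P w) x y c"
  using assms
proof (induction rv arbitrary: c)
  case Nil then show ?case by (auto simp: hclause_holds_def)
next
  case (Cons a rv)
  show ?case
  proof (cases "c \<in> set (clCr nu B rv)")
    case True then show ?thesis using Cons by blast
  next
    case False
    then have "c = ([PosU (Qs a) VY 0, LtXY, RelA (enc (KC [] B (rev rv))) 0 1], HeadRel (enc (KC [] B (rev rv @ [a]))))
       \<or> (rv = [] \<and> nu \<and> c = ([PosU (Qs a) VY 0, EqXY], HeadRel (enc (KC [] B [a]))))"
      using Cons.prems by (auto split: if_splits)
    then show ?thesis
    proof
      assume c: "c = ([PosU (Qs a) VY 0, LtXY, RelA (enc (KC [] B (rev rv))) 0 1], HeadRel (enc (KC [] B (rev rv @ [a]))))"
      show ?thesis unfolding c hclause_holds_def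
      proof (clarsimp simp: upred_holds_def var_val_def)
        fix m assume h0: "a = w ! (y - Suc 0)" "x < y" "x \<le> max (y - Suc 0) (Suc 0)" "sub w x (max (y - Suc 0) (Suc 0)) = m @ rev rv" "lderives P B m"
        have mx: "max (y - Suc 0) (Suc 0) = y - 1" using h0 Cons.prems by simp
        have h: "sub w x (y - 1) = m @ rev rv" using h0 mx by simp
        have "sub w x y = m @ rev rv @ [a]" using sub_snoc[of x y w] h h0 Cons.prems by simp
        then show "\<exists>m. sub w x y = m @ rev rv @ [w ! (y - Suc 0)] \<and> lderives P B m" using h0 by auto
      qed
    next
      assume c: "rv = [] \<and> nu \<and> c = ([PosU (Qs a) VY 0, EqXY], HeadRel (enc (KC [] B [a])))"
      show ?thesis using c Cons.prems unfolding hclause_holds_def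
        by (auto simp: upred_holds_def var_val_def sub_single)
    qed
  qed
qed

lemma sound_Cu:
  assumes "c \<in> set (clCu nu u B v)" "nu \<longrightarrow> lderives P B []" "1 \<le> x" "y \<le> length w"
  shows "hclause_holds w (rho0 P w) x y c"
  using assms
proof (induction u arbitrary: c)
  case Nil then show ?case using sound_Cr by simp
next
  case (Cons a u)
  show ?case
  proof (cases "c \<in> set (clCu nu u B v)")
    case True then show ?thesis using Cons by blast
  next
    case False
    then have "c = ([PosU (Qs a) VX 0, LtXY, RelA (enc (KC u B v)) 1 0], HeadRel (enc (KC (a#u) B v)))
       \<or> (u = [] \<and> v = [] \<and> nu \<and> c = ([PosU (Qs a) VX 0, EqXY], HeadRel (enc (KC [a] B []))))"
      using Cons.prems by (auto split: if_splits)
    then show ?thesis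
    proof
      assume c: "c = ([PosU (Qs a) VX 0, LtXY, RelA (enc (KC u B v)) 1 0], HeadRel (enc (KC (a#u) B v)))"
      show ?thesis unfolding c hclause_holds_def
      proof (clarsimp simp: upred_holds_def var_val_def)
        fix m assume h: "a = w ! (x - Suc 0)" "x < y" "min (Suc x) (length w) \<le> y" "sub w (min (Suc x) (length w)) y = u @ m @ v" "lderives P B m"
        have "min (Suc x) (length w) = x + 1" using h Cons.prems by simp
        then have "sub w x y = a # u @ m @ v" using sub_cons[of x y w] h Cons.prems by simp
        then show "\<exists>m'. sub w x y = w ! (x - Suc 0) # u @ m' @ v \<and> lderives P B m'" using h by auto
      qed
    next
      assume c: "u = [] \<and> v = [] \<and> nu \<and> c = ([PosU (Qs a) VX 0, EqXY], HeadRel (enc (KC [a] B [])))"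
      show ?thesis using c Cons.prems unfolding hclause_holds_def
        by (auto simp: upred_holds_def var_val_def sub_single)
    qed
  qed
qed

definition models :: "'a list \<Rightarrow> (nat \<Rightarrow> nat \<Rightarrow> nat \<Rightarrow> bool) \<Rightarrow> 'a hformula \<Rightarrow> bool" where
  "models w \<rho> \<Phi> = (\<forall>x\<in>{1..length w}. \<forall>y\<in>{1..length w}. \<forall>c\<in>set \<Phi>. hclause_holds w \<rho> x y c)"

lemma fire:
  assumes "models w \<rho> \<Phi>" "(bd, hh) \<in> set \<Phi>" "1 \<le> x" "x \<le> y" "y \<le> length w"
    "\<forall>\<delta>\<in>set bd. hatom_holds w \<rho> x y \<delta>"
  shows "hhead_holds \<rho> x y hh"
proof -
  have xr: "x \<in> {1..length w}" and yr: "y \<in> {1..length w}" using assms(3,4,5) by auto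
  have "\<forall>c\<in>set \<Phi>. hclause_holds w \<rho> x y c"
    using assms(1) xr yr unfolding models_def by blast
  then have "hclause_holds w \<rho> x y (bd, hh)" using assms(2) by blast
  then show ?thesis using assms(4,6) unfolding hclause_holds_def by simp
qed

lemma compl_T:
  fixes w :: "'a::countable list"
  assumes "set (clT t) \<subseteq> set \<Phi>" "models w \<rho> \<Phi>" "1 \<le> x" "x \<le> y" "y \<le> length w" "sub w x y = t"
  shows "\<rho> (enc (KT t)) x y"
  using assms
proof (induction t arbitrary: x)
  case Nil then show ?case using sub_len[of x y w] by simp
next
  case (Cons a t)
  show ?case
  proof (cases "t = []")
    case True
    then have xy: "x = y" using sub_len[of x y w] Cons.prems by simp
    then have "a = w!(x-1)" using sub_single[of x w] Cons.prems True by simp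
    moreover have "([PosU (Qs a) VX 0, EqXY], HeadRel (enc (KT [a]))) \<in> set \<Phi>" using Cons.prems True by simp
    ultimately have "hhead_holds \<rho> x y (HeadRel (enc (KT [a])))"
      apply (intro fire[of w \<rho> \<Phi>, OF Cons.prems(2) _ Cons.prems(3,4,5)])
      using xy by (auto simp add: upred_holds_def var_val_def)
    then show ?thesis using True by simp
  next
    case False
    then have xy: "x < y" using sub_len[of x y w] Cons.prems by (cases t) auto
    then have s: "a = w!(x-1)" "sub w (x+1) y = t" using sub_cons[of x y w] Cons.prems by auto
    have ih: "\<rho> (enc (KT t)) (x+1) y" using Cons.IH[of "x+1"] Cons.prems s xy by auto
    have "([PosU (Qs a) VX 0, LtXY, RelA (enc (KT t)) 1 0], HeadRel (enc (KT (a#t)))) \<in> set \<Phi>" using Cons.prems False by simp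
    then have "hhead_holds \<rho> x y (HeadRel (enc (KT (a#t))))"
      apply (rule fire[of w \<rho> \<Phi>, OF Cons.prems(2) _ Cons.prems(3,4,5)])
      using xy s ih Cons.prems by (simp add: upred_holds_def var_val_def min_def)
    then show ?thesis by simp
  qed
qed

lemma compl_Cr:
  fixes w :: "'a::countable list"
  assumes "set (clCr (lderives P B []) B rv) \<subseteq> set \<Phi>" "models w \<rho> \<Phi>" "1 \<le> x" "x \<le> y" "y \<le> length w"
    "sub w x y = m @ rev rv" "lderives P B m"
    "\<forall>x y. 1 \<le> x \<and> x \<le> y \<and> y \<le> length w \<and> sub w x y = m \<longrightarrow> \<rho> (enc (KN B :: 'a::countable key)) x y"
  shows "\<rho> (enc (KC [] B (rev rv))) x y"
  using assms
proof (induction rv arbitrary: y)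
  case Nil
  have "\<rho> (enc (KN B :: 'a key)) x y" using Nil by auto
  moreover have "([RelA (enc (KN B :: 'a key)) 0 0], HeadRel (enc (KC [] B ([]::'a list)))) \<in> set \<Phi>" using Nil by simp
  ultimately have "hhead_holds \<rho> x y (HeadRel (enc (KC [] B ([]::'a list))))"
    apply (intro fire[of w \<rho> \<Phi>, OF Nil.prems(2) _ Nil.prems(3,4,5)])
    using Nil.prems by auto
  then show ?case by simp
next
  case (Cons a rv)
  show ?case
  proof (cases "x < y")
    case False
    then have xy: "x = y" using Cons.prems by simp
    then have "m @ rev rv @ [a] = [w!(x-1)]" using sub_single[of x w] Cons.prems by simp
    then have e: "m = []" "rv = []" "a = w!(x-1)" by (auto simp: append_eq_Cons_conv)
    then have "([PosU (Qs a) VY 0, EqXY], HeadRel (enc (KC [] B [a]))) \<in> set \<Phi>" using Cons.prems by simp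
    then have "hhead_holds \<rho> x y (snd ([PosU (Qs a) VY 0, EqXY], HeadRel (enc (KC [] B [a]))))"
      apply (intro fire[of w \<rho> \<Phi>, OF Cons.prems(2) _ Cons.prems(3,4,5)])
      using xy e by (auto simp add: upred_holds_def var_val_def)
    then show ?thesis using e by simp
  next
    case True
    then have s: "sub w x (y-1) = m @ rev rv" "a = w!(y-1)" using sub_snoc[of x y w] Cons.prems by auto
    have ih: "\<rho> (enc (KC [] B (rev rv))) x (y-1)" using Cons.IH[of "y-1"] Cons.prems s True by auto
    have "([PosU (Qs a) VY 0, LtXY, RelA (enc (KC [] B (rev rv))) 0 1], HeadRel (enc (KC [] B (rev rv @ [a])))) \<in> set \<Phi>" using Cons.prems by simp
    then have "hhead_holds \<rho> x y (HeadRel (enc (KC [] B (rev rv @ [a]))))"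
      apply (rule fire[of w \<rho> \<Phi>, OF Cons.prems(2) _ Cons.prems(3,4,5)])
      using True s ih Cons.prems by (simp add: upred_holds_def var_val_def max_absorb1)
    then show ?thesis by simp
  qed
qed

lemma compl_Cu:
  fixes w :: "'a::countable list"
  assumes "set (clCu (lderives P B []) u B v) \<subseteq> set \<Phi>" "models w \<rho> \<Phi>" "1 \<le> x" "x \<le> y" "y \<le> length w"
    "sub w x y = u @ m @ v" "lderives P B m"
    "\<forall>x y. 1 \<le> x \<and> x \<le> y \<and> y \<le> length w \<and> sub w x y = m \<longrightarrow> \<rho> (enc (KN B :: 'a::countable key)) x y"
  shows "\<rho> (enc (KC u B v)) x y"
  using assms
proof (induction u arbitrary: x)
  case Nil
  then show ?case using compl_Cr[of P B "rev v" \<Phi> w \<rho> x y m] by simp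
next
  case (Cons a u)
  show ?case
  proof (cases "x < y")
    case False
    then have xy: "x = y" using Cons.prems by simp
    then have "a # u @ m @ v = [w!(x-1)]" using sub_single[of x w] Cons.prems by simp
    then have e: "m = []" "u = []" "v = []" "a = w!(x-1)" by auto
    then have "([PosU (Qs a) VX 0, EqXY], HeadRel (enc (KC [a] B ([]::'a list)))) \<in> set \<Phi>" using Cons.prems by simp
    then have "hhead_holds \<rho> x y (snd ([PosU (Qs a) VX 0, EqXY], HeadRel (enc (KC [a] B ([]::'a list)))))"
      apply (intro fire[of w \<rho> \<Phi>, OF Cons.prems(2) _ Cons.prems(3,4,5)])
      using xy e by (auto simp add: upred_holds_def var_val_def)
    then show ?thesis using e by simp
  next
    case True
    then have s: "sub w (x+1) y = u @ m @ v" "a = w!(x-1)" using sub_cons[of x y w] Cons.prems by auto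
    have ih: "\<rho> (enc (KC u B v)) (x+1) y" using Cons.IH[of "x+1"] Cons.prems s True by auto
    have "([PosU (Qs a) VX 0, LtXY, RelA (enc (KC u B v)) 1 0], HeadRel (enc (KC (a#u) B v))) \<in> set \<Phi>" using Cons.prems by simp
    then have "hhead_holds \<rho> x y (HeadRel (enc (KC (a#u) B v)))"
      apply (rule fire[of w \<rho> \<Phi>, OF Cons.prems(2) _ Cons.prems(3,4,5)])
      using True s ih Cons.prems by (simp add: upred_holds_def var_val_def min_def)
    then show ?thesis by simp
  qed
qed

lemma clA_sub:
  assumes "(A, as) \<in> set P" "\<alpha> \<in> set as"
  shows "set (clA P \<alpha>) \<subseteq> set (Phi P S)"
  using assms unfolding Phi_def by force

lemma ruleCl_in:
  assumes "(A, as) \<in> set P"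
  shows "ruleCl A as \<in> set (Phi P S)"
  using assms unfolding Phi_def by force

lemma compl_N:
  fixes w :: "'a::countable list"
  assumes "lderives P A s" "models w \<rho> (Phi P S)"
  shows "\<forall>x y. 1 \<le> x \<and> x \<le> y \<and> y \<le> length w \<and> sub w x y = s \<longrightarrow> \<rho> (enc (KN A :: 'a key)) x y"
  using assms(1)
proof induction
  case (rule A as s)
  show ?case
  proof (intro allI impI, elim conjE)
    fix x y assume xy: "1 \<le> x" "x \<le> y" "y \<le> length w" "sub w x y = s"
    have atoms: "\<forall>\<delta>\<in>set (fst (ruleCl A as)). hatom_holds w \<rho> x y \<delta>"
    proof
      fix \<delta> assume "\<delta> \<in> set (fst (ruleCl A as))"
      then obtain \<alpha> where al: "\<alpha> \<in> set as" "\<delta> = RelA (enc (keyof \<alpha>)) 0 0"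
        unfolding ruleCl_def by auto
      have sub: "set (clA P \<alpha>) \<subseteq> set (Phi P S)" using clA_sub[OF rule(1) al(1)] .
      have "\<rho> (enc (keyof \<alpha>)) x y"
      proof (cases \<alpha>)
        case (TermC t)
        then have "s = t" using bspec[OF rule(2) al(1)] by simp
        then show ?thesis using compl_T[of t "Phi P S" w \<rho> x y] sub TermC xy assms(2) by simp
      next
        case (NontC u B v)
        then obtain m where m: "s = u @ m @ v" "lderives P B m"
          "\<forall>x y. 1 \<le> x \<and> x \<le> y \<and> y \<le> length w \<and> sub w x y = m \<longrightarrow> \<rho> (enc (KN B :: 'a key)) x y"
          using bspec[OF rule(2) al(1)] NontC by auto
        then show ?thesis using compl_Cu[of P B u v "Phi P S" w \<rho> x y m] sub NontC xy assms(2) by simp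
      qed
      then show "hatom_holds w \<rho> x y \<delta>" using al xy by simp
    qed
    have "hhead_holds \<rho> x y (snd (ruleCl A as))"
      using fire[of w \<rho> "Phi P S" "fst (ruleCl A as)" "snd (ruleCl A as)" x y] ruleCl_in[OF rule(1)] assms(2) xy atoms
      by simp
    then show "\<rho> (enc (KN A :: 'a key)) x y" by (simp add: ruleCl_def)
  qed
qed

lemma sound_all:
  fixes w :: "'a::countable list"
  assumes "\<not> lderives P S w"
  shows "models w (rho0 P w) (Phi P S)"
  unfolding models_def
proof (intro ballI)
  fix x y c assume x: "x \<in> {1..length w}" and y: "y \<in> {1..length w}" and c: "c \<in> set (Phi P S)"
  from c have "c = botCl S \<or> (\<exists>(A,as)\<in>set P. c = ruleCl A as \<or> (\<exists>\<alpha>\<in>set as. c \<in> set (clA P \<alpha>)))"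
    unfolding Phi_def by auto
  then show "hclause_holds w (rho0 P w) x y c"
  proof (elim disjE bexE)
    assume "c = botCl S"
    then show ?thesis using assms x y sub_full[of w]
      by (auto simp: hclause_holds_def botCl_def upred_holds_def var_val_def)
  next
    fix r assume r: "r \<in> set P" "case r of (A, as) \<Rightarrow> c = ruleCl A as \<or> (\<exists>\<alpha>\<in>set as. c \<in> set (clA P \<alpha>))"
    obtain A as where rA: "r = (A, as)" by (cases r)
    from r rA have "c = ruleCl A as \<or> (\<exists>\<alpha>\<in>set as. c \<in> set (clA P \<alpha>))" by simp
    then show ?thesis
    proof (elim disjE bexE)
      assume c: "c = ruleCl A as"
      show ?thesis unfolding hclause_holds_def c
      proof (intro impI, elim conjE)
        assume xy: "x \<le> y" and at: "\<forall>\<delta>\<in>set (fst (ruleCl A as)). hatom_holds w (rho0 P w) x y \<delta>"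
        have "\<forall>\<alpha>\<in>set as. semk P (keyof \<alpha>) (sub w x y)"
          using at unfolding ruleCl_def by auto
        have "\<forall>\<alpha>\<in>set as. (\<exists>u. \<alpha> = TermC u \<and> sub w x y = u) \<or>
              (\<exists>u B v m. \<alpha> = NontC u B v \<and> sub w x y = u @ m @ v \<and> lderives P B m)"
        proof
          fix \<alpha> assume "\<alpha> \<in> set as"
          then have "semk P (keyof \<alpha>) (sub w x y)" using \<open>\<forall>\<alpha>\<in>set as. semk P (keyof \<alpha>) (sub w x y)\<close> by blast
          then show "(\<exists>u. \<alpha> = TermC u \<and> sub w x y = u) \<or>
              (\<exists>u B v m. \<alpha> = NontC u B v \<and> sub w x y = u @ m @ v \<and> lderives P B m)"
            by (cases \<alpha>) auto
        qed
        then have "lderives P A (sub w x y)" using lderives.rule[of A as P] r rA by blast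
        then show "hhead_holds (rho0 P w) x y (snd (ruleCl A as))" by (simp add: ruleCl_def)
      qed
    next
      fix \<alpha> assume "\<alpha> \<in> set as" and c: "c \<in> set (clA P \<alpha>)"
      show ?thesis
      proof (cases \<alpha>)
        case (TermC t) then show ?thesis using c sound_T[of c t x y w P] x y by simp
      next
        case (NontC u B v) then show ?thesis using c sound_Cu[of c "lderives P B []" u B v P x y w] x y by simp
      qed
    qed
  qed
qed

theorem lemma8:
  fixes L :: "('a::finite) list set"
  assumes "\<forall>w\<in>L. w \<noteq> []"
    and "{w. w \<noteq> [] \<and> w \<notin> L} \<in> LinConj"
  shows "L \<in> incl_ESO_HORN"
proof -
  obtain G where G: "{w. w \<noteq> [] \<and> w \<notin> L} = lgrammar_lang G"
    using assms(2) unfolding LinConj_def by auto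
  define P where "P = fst G"
  define S where "S = snd G"
  have lang: "\<And>w. w \<noteq> [] \<Longrightarrow> (w \<notin> L \<longleftrightarrow> lderives P S w)"
    using G unfolding P_def S_def lgrammar_lang_def by blast
  have hm: "\<And>w. hmodels w (Phi P S) = (\<exists>\<rho>. models w \<rho> (Phi P S))"
    unfolding hmodels_def models_def by simp
  have "L = {w. w \<noteq> [] \<and> hmodels w (Phi P S)}"
  proof (intro set_eqI iffI)
    fix w assume w: "w \<in> L"
    then have "w \<noteq> []" using assms(1) by blast
    then show "w \<in> {w. w \<noteq> [] \<and> hmodels w (Phi P S)}"
      using sound_all[of P S w] lang[of w] w hm by auto
  next
    fix w assume "w \<in> {w. w \<noteq> [] \<and> hmodels w (Phi P S)}"
    then obtain \<rho> where ne: "w \<noteq> []" and m: "models w \<rho> (Phi P S)" using hm by auto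
    show "w \<in> L"
    proof (rule ccontr)
      assume "w \<notin> L"
      then have d: "lderives P S w" using lang ne by blast
      have r: "\<rho> (enc (KN S :: 'a key)) 1 (length w)"
        using compl_N[OF d m] ne sub_full[of w] by (simp add: Suc_leI)
      have "botCl S \<in> set (Phi P S)" unfolding Phi_def by simp
      then have "hhead_holds \<rho> 1 (length w) (snd (botCl S :: 'a hclause))"
        using fire[of w \<rho> "Phi P S" "fst (botCl S :: 'a hclause)" "snd (botCl S :: 'a hclause)" 1 "length w"] m ne r
        by (simp add: botCl_def upred_holds_def var_val_def Suc_leI)
      then show False by (simp add: botCl_def)
    qed
  qed
  then show ?thesis unfolding incl_ESO_HORN_def by blast
qed

end
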